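(* Let $N\ge2$, $a\in\mathbb C$, and let $\boldsymbol\theta_0=(\theta_0^{(1)},\dots,\theta_0^{(N)})$, $\boldsymbol\theta_\infty=(\theta_\infty^{(1)},\dots,\theta_\infty^{(N)})\in\mathbb C^N$ have zero sum of components, with the $\theta_\infty^{(k)}$ pairwise distinct and no difference $\theta_\infty^{(k)}-\theta_\infty^{(l)}$ a nonzero integer. Let $r_1,\dots,r_N\in\mathbb C^\times$, $\Theta_\infty=\operatorname{diag}\boldsymbol\theta_\infty$, and define $A_1$ by $$(A_1)_{jm}=-\frac{r_j}{r_m}\cdot\frac{\prod_{k}(\theta_\infty^{(j)}-a/N+\theta_0^{(k)})}{\prod_{k\ne m}(\theta_\infty^{(m)}-\theta_\infty^{(k)})}-\delta_{jm}\frac aN,$$ and $A_0=-A_1-\Theta_\infty$. Then the solution of $$\frac{d\Phi(y)}{dy}=\Phi(y)\left(\frac{A_0}{y}+\frac{A_1}{y-1}\right)$$ with asymptotics $\Phi(y)=y^{-\Theta_\infty}(\mathbb I+O(y^{-1}))$ as $y\to\infty$ is given, for $j,m=1,\dots,N$, by $$\Phi_{jm}(y)=N_{jm}\,y^{-\theta_\infty^{(j)}-1+\delta_{jm}}\left(1-\tfrac1y\right)^{-a/N}{}_NF_{N-1}\left(\begin{matrix}\{1-\delta_{jm}-a/N+\theta_0^{(k)}+\theta_\infty^{(j)}\}_{k=1,\dots,N}\\ \{1+\theta_\infty^{(j)}-\theta_\infty^{(k)}+\delta_{mk}-\delta_{jm}\}_{k=1,\dots,N;\,k\ne j}\end{matrix}\;\Bigg|\;\frac1y\right),$$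 where $N_{jm}=\dfrac{(A_1)_{jm}}{\theta_\infty^{(m)}-\theta_\infty^{(j)}-1}$ for $j\ne m$ and $N_{jj}=1$.
   Context: ${}_NF_{N-1}$ denotes the generalized (Clausen–Thomae) hypergeometric function with the $N$ upper parameters listed in the top row and the $N-1$ lower parameters listed in the bottom row. In this setting $A_1$ is conjugate to $a\operatorname{diag}(\tfrac{N-1}N,-\tfrac1N,\dots,-\tfrac1N)$ and $A_0$ to $\operatorname{diag}\boldsymbol\theta_0$. *)

theory Defs
  imports "HOL-Analysis.Analysis"
begin

definition kdelta :: "nat \<Rightarrow> nat \<Rightarrow> complex" where
  "kdelta j m = (if j = m then 1 else 0)"

text \<open>Generalized (Clausen--Thomae) hypergeometric function pFq with upper
  parameters given by the list as and lower parameters by the list bs,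
  defined by its power series (convergent for norm z < 1 when length as = length bs + 1).\<close>
definition hyp_pFq :: "complex list \<Rightarrow> complex list \<Rightarrow> complex \<Rightarrow> complex" where
  "hyp_pFq as bs z =
     (\<Sum>n. (\<Prod>a\<leftarrow>as. pochhammer a n) / (\<Prod>b\<leftarrow>bs. pochhammer b n) * z ^ n / of_nat (fact n))"

text \<open>The matrix A_1 (indices 0..N-1).\<close>
definition matA1 :: "nat \<Rightarrow> complex \<Rightarrow> (nat \<Rightarrow> complex) \<Rightarrow> (nat \<Rightarrow> complex) \<Rightarrow> (nat \<Rightarrow> complex)
                      \<Rightarrow> nat \<Rightarrow> nat \<Rightarrow> complex" where
  "matA1 N a th0 thi r j m =
     - (r j / r m) * (\<Prod>k<N. thi j - a / of_nat N + th0 k)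
         / (\<Prod>k\<in>{..<N} - {m}. thi m - thi k)
     - kdelta j m * a / of_nat N"

definition matA0 :: "nat \<Rightarrow> complex \<Rightarrow> (nat \<Rightarrow> complex) \<Rightarrow> (nat \<Rightarrow> complex) \<Rightarrow> (nat \<Rightarrow> complex)
                      \<Rightarrow> nat \<Rightarrow> nat \<Rightarrow> complex" where
  "matA0 N a th0 thi r j m = - matA1 N a th0 thi r j m - kdelta j m * thi j"

definition normc :: "nat \<Rightarrow> complex \<Rightarrow> (nat \<Rightarrow> complex) \<Rightarrow> (nat \<Rightarrow> complex) \<Rightarrow> (nat \<Rightarrow> complex)
                      \<Rightarrow> nat \<Rightarrow> nat \<Rightarrow> complex" where
  "normc N a th0 thi r j m =
     (if j = m then 1 else matA1 N a th0 thi r j m / (thi m - thi j - 1))"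

text \<open>The explicit solution Phi_jm(y) (principal branches of the powers).\<close>
definition PhiSol :: "nat \<Rightarrow> complex \<Rightarrow> (nat \<Rightarrow> complex) \<Rightarrow> (nat \<Rightarrow> complex) \<Rightarrow> (nat \<Rightarrow> complex)
                      \<Rightarrow> complex \<Rightarrow> nat \<Rightarrow> nat \<Rightarrow> complex" where
  "PhiSol N a th0 thi r y j m =
     normc N a th0 thi r j m * y powr (- thi j - 1 + kdelta j m)
       * (1 - 1 / y) powr (- a / of_nat N)
       * hyp_pFq (map (\<lambda>k. 1 - kdelta j m - a / of_nat N + th0 k + thi j) [0..<N])
                 (map (\<lambda>k. 1 + thi j - thi k + kdelta m k - kdelta j m)
                      (filter (\<lambda>k. k \<noteq> j) [0..<N]))
                 (1 / y)"

definition solDom :: "complex set" where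
  "solDom = {y. 1 < norm y \<and> y \<notin> {t. t \<in> \<real> \<and> Re t \<le> 0}}"

end

theory Submission
  imports Defs "HOL-Computational_Algebra.Polynomial"
begin

lemma pf_poly:
  fixes b d :: "nat \<Rightarrow> complex"
  assumes inj: "inj_on d {..<N}"
  shows "(\<Prod>l<N. b l + x) = (\<Prod>l<N. d l + x) +
     (\<Sum>k<N. (\<Prod>l<N. b l - d k) / (\<Prod>l\<in>{..<N}-{k}. d l - d k) * (\<Prod>l\<in>{..<N}-{k}. d l + x))"
proof (cases "N = 0")
  case True then show ?thesis by simp
next
  case False
  define w where "w k = (\<Prod>l<N. b l - d k) / (\<Prod>l\<in>{..<N}-{k}. d l - d k)" for k
  define P where "P = (\<Prod>l<N. [:b l, 1:]) - (\<Prod>l<N. [:d l, 1:])"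
  define Q where "Q = (\<Sum>k<N. smult (w k) (\<Prod>l\<in>{..<N}-{k}. [:d l, 1:]))"
  define p where "p = P - Q"
  have dega: "degree (\<Prod>l<N. [:c l, 1:]) = N" for c :: "nat \<Rightarrow> complex"
    by (subst degree_prod_eq_sum_degree) auto
  have lca: "coeff (\<Prod>l<N. [:c l, 1:]) N = 1" for c :: "nat \<Rightarrow> complex"
    using lead_coeff_prod[of "\<lambda>l. [:c l, 1:]" "{..<N}"] dega[of c] by simp
  have cP: "coeff P i = 0" if "i \<ge> N" for i
  proof (cases "i = N")
    case True then show ?thesis by (simp add: P_def lca)
  next
    case False
    with that have "i > N" by simp
    then show ?thesis unfolding P_def coeff_diff
      using coeff_eq_0[of "\<Prod>l<N. [:b l, 1:]" i] coeff_eq_0[of "\<Prod>l<N. [:d l, 1:]" i] dega by simp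
  qed
  have dP: "degree P \<le> N - 1"
    by (rule degree_le) (use cP in auto)
  have dQ: "degree Q \<le> N - 1"
    unfolding Q_def
  proof (rule degree_sum_le)
    fix k assume "k \<in> {..<N}"
    have "degree (\<Prod>l\<in>{..<N}-{k}. [:d l, 1:]) = (\<Sum>l\<in>{..<N}-{k}. degree [:d l, 1:])"
      by (rule degree_prod_eq_sum_degree) simp
    also have "\<dots> = card ({..<N}-{k})" by simp
    also have "\<dots> = N - 1" using \<open>k \<in> {..<N}\<close> by simp
    finally have h: "degree (\<Prod>l\<in>{..<N}-{k}. [:d l, 1:]) \<le> N - 1" by simp
    show "degree (smult (w k) (\<Prod>l\<in>{..<N}-{k}. [:d l, 1:])) \<le> N - 1"
      by (rule order_trans[OF degree_smult_le h])
  qed simp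
  have dp: "degree p \<le> N - 1" unfolding p_def by (rule degree_diff_le[OF dP dQ])
  have root: "poly p (- d k) = 0" if k: "k < N" for k
  proof -
    have z1: "(\<Prod>l<N. d l - d k) = 0"
      by (rule prod_zero) (use k in auto)
    have z2: "(\<Prod>l\<in>{..<N}-{k'}. d l - d k) = 0" if "k' < N" "k' \<noteq> k" for k'
      by (rule prod_zero) (use k that in auto)
    have s0: "(\<Sum>k'\<in>{..<N}-{k}. w k' * (\<Prod>l\<in>{..<N}-{k'}. d l - d k)) = 0"
      by (rule sum.neutral) (use z2 in auto)
    have nz: "(\<Prod>l\<in>{..<N}-{k}. d l - d k) \<noteq> 0"
      using inj k by (auto simp: inj_on_def)
    have "poly Q (- d k) = (\<Sum>k'<N. w k' * (\<Prod>l\<in>{..<N}-{k'}. d l - d k))"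
      by (simp add: Q_def poly_sum poly_prod)
    also have "\<dots> = w k * (\<Prod>l\<in>{..<N}-{k}. d l - d k) + (\<Sum>k'\<in>{..<N}-{k}. w k' * (\<Prod>l\<in>{..<N}-{k'}. d l - d k))"
      by (subst sum.remove[of _ k]) (use k in auto)
    also have "\<dots> = (\<Prod>l<N. b l - d k)"
      using nz by (simp only: s0) (simp add: w_def)
    finally show ?thesis
      by (simp add: p_def P_def poly_prod z1)
  qed
  have "p = 0"
  proof (rule ccontr)
    assume "p \<noteq> 0"
    have "(\<lambda>k. - d k) ` {..<N} \<subseteq> {x. poly p x = 0}" using root by auto
    moreover have "finite {x. poly p x = 0}" using poly_roots_finite[OF \<open>p \<noteq> 0\<close>] .
    ultimately have "card ((\<lambda>k. - d k) ` {..<N}) \<le> card {x. poly p x = 0}"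
      by (rule card_mono[rotated])
    also have "card ((\<lambda>k. - d k) ` {..<N}) = N"
      using inj by (subst card_image) (auto simp: inj_on_def)
    finally show False using card_poly_roots_bound[OF \<open>p \<noteq> 0\<close>] dp False by linarith
  qed
  then have "poly p x = 0" by simp
  then show ?thesis
    by (simp add: p_def P_def Q_def poly_sum poly_prod w_def algebra_simps)
qed

definition hcoef :: "complex list \<Rightarrow> complex list \<Rightarrow> nat \<Rightarrow> complex" where
  "hcoef as bs n = (\<Prod>a\<leftarrow>as. pochhammer a n) / (\<Prod>b\<leftarrow>bs. pochhammer b n) / of_nat (fact n)"

lemma hyp_pFq_eval: "hyp_pFq as bs z = eval_fps (Abs_fps (hcoef as bs)) z"
  unfolding hyp_pFq_def eval_fps_def hcoef_def by simp

lemma prod_list_map_nth: "(\<Prod>a\<leftarrow>as. f a) = (\<Prod>i<length as. f (as ! i))"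
  by (simp add: prod.list_conv_set_nth atLeast0LessThan)

lemma of_nat_p1_nz [simp]: "(of_nat n + 1 :: complex) \<noteq> 0" "(1 + of_nat n :: complex) \<noteq> 0"
proof -
  have "(of_nat n + 1 :: complex) = of_nat (Suc n)" by simp
  also have "\<dots> \<noteq> 0" by (metis of_nat_eq_0_iff Zero_not_Suc)
  finally show "(of_nat n + 1 :: complex) \<noteq> 0" .
  then show "(1 + of_nat n :: complex) \<noteq> 0" by (simp add: add.commute)
qed

lemma aux_div: "(p::complex) \<noteq> 0 \<Longrightarrow> X/Y/p = (X/p^a)/(Y/p^b) * (p^a/p^b/p)"
  by (cases "Y = 0") (simp_all add: field_simps)

lemma conv_radius_ratio_ge1:
  fixes c q :: "nat \<Rightarrow> complex"
  assumes rec: "\<And>n. c (Suc n) = c n * q n" and lim: "q \<longlonglongrightarrow> 1"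
  shows "conv_radius c \<ge> 1"
proof (rule conv_radius_geI_ex')
  fix r :: real assume r: "0 < r" "ereal r < 1"
  then have r1: "r < 1" by simp
  define K where "K = (1 + r) / (2 * r)"
  have K1: "K > 1" using r r1 by (simp add: K_def field_simps)
  have "eventually (\<lambda>n. norm (q n) < K) sequentially"
    using tendsto_norm[OF lim] K1 by (simp add: order_tendsto_iff)
  then obtain M where M: "\<And>n. n \<ge> M \<Longrightarrow> norm (q n) < K"
    by (auto simp: eventually_sequentially)
  show "summable (\<lambda>n. c n * of_real r ^ n)"
  proof (rule summable_ratio_test[of "(1 + r) / 2" M])
    show "(1 + r) / 2 < 1" using r1 by simp
    fix n assume n: "n \<ge> M"
    have "norm (c (Suc n) * of_real r ^ Suc n) = norm (q n) * r * norm (c n * of_real r ^ n)"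
      using r by (simp add: rec norm_mult norm_power mult_ac)
    also have "\<dots> \<le> K * r * norm (c n * of_real r ^ n)"
      using M[OF n] r by (intro mult_right_mono) auto
    also have "K * r = (1 + r) / 2" using r by (simp add: K_def field_simps)
    finally show "norm (c (Suc n) * complex_of_real r ^ Suc n) \<le> (1 + r) / 2 * norm (c n * complex_of_real r ^ n)" .
  qed
qed

lemma lim_shift_ratio: "(\<lambda>n. (a + of_nat n) / (of_nat n + 1 :: complex)) \<longlonglongrightarrow> 1"
proof -
  have "(\<lambda>n. 1 + (a - 1) / of_nat (Suc n) :: complex) \<longlonglongrightarrow> 1 + 0"
    by (intro tendsto_intros LIMSEQ_Suc[OF lim_const_over_n])
  moreover have "(a + of_nat n) / (of_nat n + 1) = 1 + (a - 1) / of_nat (Suc n)" for n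
  proof -
    have "(of_nat n + 1 :: complex) \<noteq> 0" by simp
    then show ?thesis by (simp add: field_simps)
  qed
  ultimately show ?thesis by simp
qed

lemma fps_conv_radius_hcoef:
  assumes "length as = Suc (length bs)"
  shows "fps_conv_radius (Abs_fps (hcoef as bs)) \<ge> 1"
proof -
  define q where "q n = (\<Prod>i<length as. (as ! i + of_nat n) / (of_nat n + 1)) /
       (\<Prod>i<length bs. (bs ! i + of_nat n) / (of_nat n + 1))" for n
  have rec: "hcoef as bs (Suc n) = hcoef as bs n * q n" for n
  proof -
    have e: "(of_nat n + 1 :: complex) ^ length as / (of_nat n + 1) ^ length bs / (of_nat n + 1) = 1"
      by (simp add: assms)
    have "hcoef as bs (Suc n) = (\<Prod>i<length as. pochhammer (as!i) n * (as!i + of_nat n)) /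
       (\<Prod>i<length bs. pochhammer (bs!i) n * (bs!i + of_nat n)) / (of_nat (fact n) * (of_nat n + 1))"
      by (simp add: hcoef_def prod_list_map_nth pochhammer_Suc mult_ac ring_distribs)
    also have "\<dots> = hcoef as bs n * ((\<Prod>i<length as. (as ! i + of_nat n)) /
       (\<Prod>i<length bs. (bs ! i + of_nat n)) / (of_nat n + 1))"
      by (simp add: hcoef_def prod_list_map_nth prod.distrib)
    also have "(\<Prod>i<length as. (as ! i + of_nat n)) / (\<Prod>i<length bs. (bs ! i + of_nat n)) / (of_nat n + 1)
       = q n * ((of_nat n + 1) ^ length as / (of_nat n + 1) ^ length bs / (of_nat n + 1))"
    proof -
      have "q n = ((\<Prod>i<length as. (as ! i + of_nat n)) / (of_nat n + 1) ^ length as) /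
                  ((\<Prod>i<length bs. (bs ! i + of_nat n)) / (of_nat n + 1) ^ length bs)"
        by (simp add: q_def prod_dividef)
      then show ?thesis by (simp add: aux_div)
    qed
    finally have F: "hcoef as bs (Suc n) = hcoef as bs n * (q n * ((of_nat n + 1) ^ length as / (of_nat n + 1) ^ length bs / (of_nat n + 1)))" .
    show ?thesis using F unfolding e by simp
  qed
  have lim: "q \<longlonglongrightarrow> 1"
  proof -
    have "q \<longlonglongrightarrow> (\<Prod>i<length as. 1) / (\<Prod>i<length bs. 1)"
      unfolding q_def by (intro tendsto_intros lim_shift_ratio) simp
    then show ?thesis by simp
  qed
  show ?thesis
    unfolding fps_conv_radius_def fps_nth_Abs_fps
    by (rule conv_radius_ratio_ge1[OF rec lim])
qed

definition UU :: "nat \<Rightarrow> complex \<Rightarrow> (nat \<Rightarrow> complex) \<Rightarrow> (nat \<Rightarrow> complex) \<Rightarrow> (nat \<Rightarrow> complex) \<Rightarrow> nat \<Rightarrow> complex" where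
  "UU N a th0 thi r k = r k * (\<Prod>l<N. thi k - a / of_nat N + th0 l)"
definition VV :: "nat \<Rightarrow> (nat \<Rightarrow> complex) \<Rightarrow> (nat \<Rightarrow> complex) \<Rightarrow> nat \<Rightarrow> complex" where
  "VV N thi r m = 1 / (r m * (\<Prod>l\<in>{..<N}-{m}. thi m - thi l))"

lemma matA1_UV: "matA1 N a th0 thi r k m = - UU N a th0 thi r k * VV N thi r m - kdelta k m * a / of_nat N"
  by (simp add: matA1_def UU_def VV_def field_simps)

lemma aux2: "(Dp::complex) \<noteq> 0 \<Longrightarrow> K \<noteq> 0 \<Longrightarrow>
   R * Bp * V * B1 / (D1 * E) / F = V * (R * Dp) * (Bp * B1 / (Dp * D1) / (F * K)) * K / E"
  by (cases "D1 = 0"; cases "E = 0"; cases "F = 0") (simp_all add: field_simps)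

lemma aux3: "(z::complex) \<noteq> 0 \<Longrightarrow> z * (X / z) = X" by simp
lemma aux4: "(K::complex) \<noteq> 0 \<Longrightarrow> (Pb*Qb)/(Pd*Qd)/(F*K)*K = Pb/Pd/F*Qb/Qd"
  by (cases "Pd = 0"; cases "Qd = 0"; cases "F = 0") (simp_all add: field_simps)
lemma aux5: "(z::complex) \<noteq> 0 \<Longrightarrow> P \<noteq> 0 \<Longrightarrow> A / z = A * P / (z * P)" by simp

locale fixj =
  fixes N :: nat and a :: complex and th0 thi r :: "nat \<Rightarrow> complex" and j :: nat
  assumes jN: "j < N"
    and dist: "\<And>k l. k < N \<Longrightarrow> l < N \<Longrightarrow> k \<noteq> l \<Longrightarrow> thi k \<noteq> thi l"
    and nonint: "\<And>k l n. k < N \<Longrightarrow> l < N \<Longrightarrow> n \<noteq> 0 \<Longrightarrow> thi k - thi l \<noteq> of_int n"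
    and rnz: "\<And>k. k < N \<Longrightarrow> r k \<noteq> 0"
begin

definition "b l = thi j - a / of_nat N + th0 l"
definition "d l = thi j - thi l"
definition "U = UU N a th0 thi r"
definition "V = VV N thi r"
definition "cc n = (\<Prod>l<N. pochhammer (b l) n) / (\<Prod>l\<in>{..<N}-{j}. pochhammer (d l) n) / of_nat (fact n)"
definition "AS m = map (\<lambda>k. 1 - kdelta j m - a / of_nat N + th0 k + thi j) [0..<N]"
definition "BS m = map (\<lambda>k. 1 + thi j - thi k + kdelta m k - kdelta j m) (filter (\<lambda>k. k \<noteq> j) [0..<N])"
definition "eta m n = normc N a th0 thi r j m *
   (if j = m then hcoef (AS m) (BS m) n else if n = 0 then 0 else hcoef (AS m) (BS m) (n - 1))"

lemma d_j [simp]: "d j = 0" by (simp add: d_def)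

lemma d_notint: assumes "l < N" "l \<noteq> j" shows "d l \<noteq> of_int z"
proof (cases "z = 0")
  case True then show ?thesis using dist[OF jN assms(1)] assms by (simp add: d_def)
next
  case False then show ?thesis using nonint[OF jN assms(1) False] by (simp add: d_def)
qed

lemma d_plus_nat_nz: assumes "l < N" "l \<noteq> j" shows "d l + of_nat i \<noteq> 0"
proof
  assume "d l + of_nat i = 0"
  then have "d l = of_int (- int i)" by (simp add: eq_neg_iff_add_eq_0)
  with d_notint[OF assms] show False by blast
qed

lemma d_plus_n_nz: assumes "l < N" "n > 0" shows "d l + of_nat n \<noteq> 0"
  using d_plus_nat_nz[OF assms(1)] assms by (cases "l = j") auto

lemma poch_d_nz: assumes "l < N" "l \<noteq> j" shows "pochhammer (d l + of_nat i) n \<noteq> 0"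
proof
  assume "pochhammer (d l + of_nat i) n = 0"
  then obtain k where H: "d l + of_nat i = - of_nat k" by (auto simp: pochhammer_eq_0_iff)
  have "d l + of_nat (i + k) = (d l + of_nat i) + of_nat k" by simp
  also have "\<dots> = 0" using H by simp
  finally have "d l + of_nat (i + k) = 0" .
  with d_plus_nat_nz[OF assms] show False by blast
qed

lemma prodd_nz: "(\<Prod>l\<in>{..<N}-{j}. d l) \<noteq> 0"
  using d_plus_nat_nz[of _ 0] by (simp add: prod_zero_iff)

lemma V_nz: "k < N \<Longrightarrow> V k \<noteq> 0"
  using rnz dist by (simp add: V_def VV_def prod_zero_iff)

lemma inv_Vj: "1 / V j = r j * (\<Prod>l\<in>{..<N}-{j}. d l)"
  by (simp add: V_def VV_def d_def)

lemma Uj: "U j = r j * (\<Prod>l<N. b l)"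
  by (simp add: U_def UU_def b_def)

lemma UV: assumes "k < N" shows "U k * V k = (\<Prod>l<N. b l - d k) / (\<Prod>l\<in>{..<N}-{k}. d l - d k)"
proof -
  have 1: "(\<Prod>l<N. b l - d k) = (\<Prod>l<N. thi k - a / of_nat N + th0 l)"
    by (rule prod.cong) (simp_all add: b_def d_def)
  have 2: "(\<Prod>l\<in>{..<N}-{k}. d l - d k) = (\<Prod>l\<in>{..<N}-{k}. thi k - thi l)"
    by (rule prod.cong) (simp_all add: d_def)
  show ?thesis using rnz[OF assms] unfolding 1 2 by (simp add: U_def UU_def V_def VV_def)
qed

lemma prod_list_map_distinct: "distinct xs \<Longrightarrow> (\<Prod>x\<leftarrow>map f xs. g x) = (\<Prod>k\<in>set xs. g (f k))"
  by (simp add: prod.distinct_set_conv_list map_map o_def)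

lemma hcoef_jj: "hcoef (AS j) (BS j) n = cc n"
proof -
  have 1: "(\<Prod>x\<leftarrow>AS j. pochhammer x n) = (\<Prod>l<N. pochhammer (b l) n)"
    unfolding AS_def by (subst prod_list_map_distinct) (auto simp: b_def kdelta_def atLeast0LessThan algebra_simps intro!: prod.cong)
  have 2: "(\<Prod>x\<leftarrow>BS j. pochhammer x n) = (\<Prod>l\<in>{..<N}-{j}. pochhammer (d l) n)"
    unfolding BS_def by (subst prod_list_map_distinct) (auto simp: d_def kdelta_def intro!: prod.cong)
  show ?thesis unfolding hcoef_def 1 2 cc_def ..
qed

lemma eta_jj: "eta j n = cc n"
  by (simp add: eta_def hcoef_jj normc_def)

lemma hcoef_jm: assumes "m \<noteq> j"
  shows "hcoef (AS m) (BS m) n = (\<Prod>l<N. pochhammer (b l + 1) n) /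
     (\<Prod>l\<in>{..<N}-{j}. pochhammer (d l + 1 + kdelta m l) n) / of_nat (fact n)"
proof -
  have 1: "(\<Prod>x\<leftarrow>AS m. pochhammer x n) = (\<Prod>l<N. pochhammer (b l + 1) n)"
    unfolding AS_def using assms
    by (subst prod_list_map_distinct) (auto simp: b_def kdelta_def atLeast0LessThan algebra_simps intro!: prod.cong)
  have 2: "(\<Prod>x\<leftarrow>BS m. pochhammer x n) = (\<Prod>l\<in>{..<N}-{j}. pochhammer (d l + 1 + kdelta m l) n)"
    unfolding BS_def using assms
    by (subst prod_list_map_distinct) (auto simp: d_def kdelta_def algebra_simps intro!: prod.cong)
  show ?thesis unfolding hcoef_def 1 2 ..
qed

lemma normc_jm: assumes "m \<noteq> j" shows "normc N a th0 thi r j m = U j * V m / (d m + 1)"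
proof -
  have "normc N a th0 thi r j m = (- (U j * V m)) / (thi m - thi j - 1)"
    using assms by (simp add: normc_def matA1_UV kdelta_def U_def V_def)
  also have "thi m - thi j - 1 = -(d m + 1)" by (simp add: d_def)
  finally show ?thesis by (simp only: minus_divide_divide)
qed

lemma cc_0: "cc 0 = 1" by (simp add: cc_def)

lemma eta_uniform: assumes m: "m < N"
  shows "eta m n = (if m = j \<and> n = 0 then 1 else 0) + V m / V j * cc n * of_nat n / (d m + of_nat n)"
proof (cases "m = j")
  case True
  then show ?thesis using cc_0 V_nz[OF jN] by (cases n) (simp_all add: eta_jj)
next
  case mj: False
  show ?thesis
  proof (cases n)
    case 0 then show ?thesis using mj by (simp add: eta_def)
  next
    case (Suc k)
    have mm: "m \<in> {..<N}-{j}" using m mj by simp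
    define Bp where "Bp = (\<Prod>l<N. b l)"
    define B1 where "B1 = (\<Prod>l<N. pochhammer (b l + 1) k)"
    define Dp where "Dp = (\<Prod>l\<in>{..<N}-{j}. d l)"
    define D1 where "D1 = (\<Prod>l\<in>{..<N}-{j}. pochhammer (d l + 1) k)"
    define Dm where "Dm = (\<Prod>l\<in>{..<N}-{j}. pochhammer (d l + 1 + kdelta m l) k)"
    define E where "E = d m + 1 + of_nat k"
    have F1: "(\<Prod>l<N. pochhammer (b l) (Suc k)) = Bp * B1"
      by (simp add: Bp_def B1_def pochhammer_rec prod.distrib)
    have F2: "(\<Prod>l\<in>{..<N}-{j}. pochhammer (d l) (Suc k)) = Dp * D1"
      by (simp add: Dp_def D1_def pochhammer_rec prod.distrib)
    have F3: "(d m + 1) * Dm = D1 * E"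
    proof -
      have r1: "Dm = pochhammer (d m + 1 + 1) k * (\<Prod>l\<in>{..<N}-{j}-{m}. pochhammer (d l + 1) k)"
        unfolding Dm_def by (subst prod.remove[OF _ mm]) (auto simp: kdelta_def intro!: prod.cong)
      have r2: "D1 = pochhammer (d m + 1) k * (\<Prod>l\<in>{..<N}-{j}-{m}. pochhammer (d l + 1) k)"
        unfolding D1_def by (subst prod.remove[OF _ mm]) auto
      have r3: "(d m + 1) * pochhammer (d m + 1 + 1) k = pochhammer (d m + 1) k * E"
        using pochhammer_rec[of "d m + 1" k] pochhammer_rec'[of "d m + 1" k] by (simp add: E_def mult_ac add_ac)
      show ?thesis unfolding r1 r2 using r3 by (simp add: mult_ac)
    qed
    have nz1: "d m + 1 \<noteq> 0" using d_plus_nat_nz[OF m mj, of 1] by simp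
    have nzE: "E \<noteq> 0" using d_plus_nat_nz[OF m mj, of "Suc k"] by (simp add: E_def add_ac)
    have nzD1: "D1 \<noteq> 0" unfolding D1_def
      using poch_d_nz[of _ 1] by (simp add: prod_zero_iff)
    have nzDm: "Dm \<noteq> 0" using F3 nz1 nzD1 nzE by auto
    have nzDp: "Dp \<noteq> 0" using prodd_nz by (simp add: Dp_def)
    have nzk: "(of_nat k + 1 :: complex) \<noteq> 0" by simp
    have fk: "(fact k :: complex) \<noteq> 0" by simp
    have nzk': "(1 + of_nat k :: complex) \<noteq> 0" by simp
    have lhs: "eta m n = U j * V m / (d m + 1) * (B1 / Dm / of_nat (fact k))"
      using mj Suc by (simp add: eta_def normc_jm hcoef_jm B1_def Dm_def)
    have ccs: "cc n = Bp * B1 / (Dp * D1) / (of_nat (fact k) * (of_nat k + 1))"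
      using Suc by (simp add: cc_def F1 F2 add_ac ring_distribs mult_ac)
    have "eta m n = r j * Bp * V m * B1 / ((d m + 1) * Dm) / of_nat (fact k)"
      unfolding lhs Uj Bp_def by simp
    also have "\<dots> = r j * Bp * V m * B1 / (D1 * E) / of_nat (fact k)"
      by (simp only: F3)
    also have "\<dots> = V m * (r j * Dp) * cc n * (of_nat k + 1) / E"
      unfolding ccs by (rule aux2[OF nzDp nzk])
    also have "\<dots> = V m / V j * cc n * of_nat n / (d m + of_nat n)"
      unfolding inv_Vj[symmetric] Dp_def using Suc by (simp add: E_def add_ac)
    finally show ?thesis using mj by simp
  qed
qed

lemma d_inj: "inj_on d {..<N}"
  using dist jN by (auto simp: inj_on_def d_def)

lemma A_eq: assumes m: "m < N" shows "(of_nat n + d m) * eta m n = V m / V j * cc n * of_nat n"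
proof (cases "n = 0")
  case True then show ?thesis using m by (cases "m = j") (simp_all add: eta_uniform)
next
  case False
  then have nz: "d m + of_nat n \<noteq> 0" using d_plus_n_nz[OF m] by simp
  have e: "eta m n = (V m / V j * cc n * of_nat n) / (d m + of_nat n)" using False m by (simp add: eta_uniform)
  show ?thesis by (simp only: e add.commute[of "of_nat n"]) (rule aux3[OF nz])
qed

lemma cc_Suc: "cc (Suc n) * (of_nat n + 1) =
   cc n * (\<Prod>l<N. b l + of_nat n) / (\<Prod>l\<in>{..<N}-{j}. d l + of_nat n)"
proof -
  have f: "(of_nat (fact (Suc n)) :: complex) = of_nat (fact n) * (of_nat n + 1)"
    by (simp add: algebra_simps)
  show ?thesis unfolding cc_def pochhammer_Suc prod.distrib f
    by (rule aux4) simp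
qed

lemma eta_pos: "k < N \<Longrightarrow> n > 0 \<Longrightarrow> eta k n = V k / V j * cc n * of_nat n / (d k + of_nat n)"
  by (simp add: eta_uniform)

lemma eta_zero: "k < N \<Longrightarrow> eta k 0 = (if k = j then 1 else 0)"
  by (simp add: eta_uniform)

lemma S_eq: assumes "n > 0"
  shows "(\<Sum>k<N. U k * eta k n) = cc n * of_nat n / V j * (\<Sum>k<N. U k * V k / (d k + of_nat n))"
  unfolding sum_distrib_left
  by (rule sum.cong) (use assms in \<open>simp_all add: eta_pos\<close>)

lemma PFn: assumes "n > 0"
  shows "(\<Sum>k<N. U k * V k / (d k + of_nat n)) =
     (\<Prod>l<N. b l + of_nat n) / (of_nat n * (\<Prod>l\<in>{..<N}-{j}. d l + of_nat n)) - 1"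
proof -
  define x :: complex where "x = of_nat n"
  define Q where "Q = (\<Prod>l<N. d l + x)"
  have Qnz: "Q \<noteq> 0" unfolding Q_def x_def using d_plus_n_nz assms by (simp add: prod_zero_iff)
  have Qj: "Q = x * (\<Prod>l\<in>{..<N}-{j}. d l + x)"
    unfolding Q_def by (subst prod.remove[of _ j]) (use jN in auto)
  have Qk: "Q = (d k + x) * (\<Prod>l\<in>{..<N}-{k}. d l + x)" if "k < N" for k
    unfolding Q_def by (subst prod.remove[of _ k]) (use that in auto)
  have pf: "(\<Prod>l<N. b l + x) = Q + (\<Sum>k<N. U k * V k * (\<Prod>l\<in>{..<N}-{k}. d l + x))"
    unfolding Q_def using pf_poly[OF d_inj, of b x]
    by (simp add: UV)
  have "(\<Sum>k<N. U k * V k / (d k + x)) = (\<Sum>k<N. U k * V k * (\<Prod>l\<in>{..<N}-{k}. d l + x)) / Q"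
    unfolding sum_divide_distrib
  proof (rule sum.cong)
    fix k assume k: "k \<in> {..<N}"
    have nz: "d k + x \<noteq> 0" using d_plus_n_nz k assms by (simp add: x_def)
    have nz2: "(\<Prod>l\<in>{..<N}-{k}. d l + x) \<noteq> 0" using Qnz Qk k by auto
    show "U k * V k / (d k + x) = U k * V k * (\<Prod>l\<in>{..<N}-{k}. d l + x) / Q"
      unfolding Qk[OF k[simplified]] by (rule aux5[OF nz nz2])
  qed simp
  also have "\<dots> = (Q + (\<Sum>k<N. U k * V k * (\<Prod>l\<in>{..<N}-{k}. d l + x))) / Q - 1"
    using Qnz by (simp add: field_simps)
  also have "\<dots> = (\<Prod>l<N. b l + x) / Q - 1"
    by (simp only: pf[symmetric])
  finally show ?thesis unfolding x_def[symmetric] Qj .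
qed

lemma key: assumes m: "m < N"
  shows "(of_nat (Suc n) + d m) * eta m (Suc n) - (of_nat n + d m) * eta m n =
    V m * (\<Sum>k<N. U k * eta k n)"
proof (cases "n = 0")
  case True
  have s: "(\<Sum>k<N. U k * eta k 0) = U j"
    by (subst sum.cong[OF refl, of _ _ "\<lambda>k. if k = j then U k else 0"]) (use jN in \<open>auto simp: eta_zero\<close>)
  have c1: "cc 1 = (\<Prod>l<N. b l) / (\<Prod>l\<in>{..<N}-{j}. d l)" by (simp add: cc_def)
  have "(of_nat (Suc 0) + d m) * eta m (Suc 0) - (of_nat 0 + d m) * eta m 0 = V m / V j * cc 1"
    using A_eq[OF m, of 1] A_eq[OF m, of 0] by simp
  also have "\<dots> = V m * U j"
    unfolding c1 divide_inverse inv_Vj[unfolded divide_inverse, simplified] Uj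
    using prodd_nz by (simp add: field_simps)
  finally show ?thesis using True s by simp
next
  case False
  then have n: "n > 0" by simp
  have nz: "of_nat n \<noteq> (0::complex)" using n by simp
  have "(of_nat (Suc n) + d m) * eta m (Suc n) - (of_nat n + d m) * eta m n
     = V m / V j * (cc (Suc n) * (of_nat n + 1) - cc n * of_nat n)"
    unfolding A_eq[OF m] using V_nz[OF jN] by (simp add: field_simps)
  also have "\<dots> = V m / V j * (cc n * (\<Prod>l<N. b l + of_nat n) / (\<Prod>l\<in>{..<N}-{j}. d l + of_nat n) - cc n * of_nat n)"
    by (simp only: cc_Suc)
  also have "\<dots> = V m * (cc n * of_nat n / V j * ((\<Prod>l<N. b l + of_nat n) / (of_nat n * (\<Prod>l\<in>{..<N}-{j}. d l + of_nat n)) - 1))"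
    using nz by (simp add: field_simps)
  also have "\<dots> = V m * (\<Sum>k<N. U k * eta k n)"
    by (simp only: S_eq[OF n] PFn[OF n])
  finally show ?thesis .
qed

end

lemma eval_fps_sum:
  fixes f :: "'b \<Rightarrow> complex fps"
  assumes "finite A" "\<And>k. k \<in> A \<Longrightarrow> norm x < fps_conv_radius (f k)"
  shows "norm x < fps_conv_radius (\<Sum>k\<in>A. f k) \<and> eval_fps (\<Sum>k\<in>A. f k) x = (\<Sum>k\<in>A. eval_fps (f k) x)"
  using assms
proof (induction A rule: finite_induct)
  case empty then show ?case by simp
next
  case (insert k A)
  then have IH: "norm x < fps_conv_radius (\<Sum>k\<in>A. f k)" "eval_fps (\<Sum>k\<in>A. f k) x = (\<Sum>k\<in>A. eval_fps (f k) x)"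
    by auto
  have fk: "norm x < fps_conv_radius (f k)" using insert by auto
  have "norm x < min (fps_conv_radius (f k)) (fps_conv_radius (\<Sum>k\<in>A. f k))"
    using IH fk by simp
  also have "\<dots> \<le> fps_conv_radius (f k + (\<Sum>k\<in>A. f k))" by (rule fps_conv_radius_add)
  finally show ?case using insert IH fk by (simp add: eval_fps_add)
qed

lemma radius_mult_lt: "norm (x::complex) < fps_conv_radius f \<Longrightarrow> norm x < fps_conv_radius g \<Longrightarrow> norm x < fps_conv_radius (f * g)"
  using fps_conv_radius_mult by (metis min_less_iff_conj order_less_le_trans)

context fixj
begin

lemma length_AS: "length (AS m) = N" by (simp add: AS_def)

lemma length_BS: "length (BS m) = N - 1"
proof -
  have "length (filter (\<lambda>k. k \<noteq> j) [0..<N]) = card (set (filter (\<lambda>k. k \<noteq> j) [0..<N]))"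
    by (rule distinct_card[symmetric]) simp
  also have "set (filter (\<lambda>k. k \<noteq> j) [0..<N]) = {..<N} - {j}" by auto
  also have "card \<dots> = N - 1" using jN by simp
  finally show ?thesis by (simp add: BS_def)
qed

lemma radius_hc: "fps_conv_radius (Abs_fps (hcoef (AS m) (BS m))) \<ge> 1"
  by (rule fps_conv_radius_hcoef) (use jN in \<open>simp add: length_AS length_BS\<close>)

definition "H m = Abs_fps (eta m)"

lemma H_eq: "H m = fps_const (normc N a th0 thi r j m) *
   (if j = m then Abs_fps (hcoef (AS m) (BS m)) else fps_X * Abs_fps (hcoef (AS m) (BS m)))"
  by (rule fps_ext) (simp add: H_def eta_def)

lemma radius_H: "fps_conv_radius (H m) \<ge> 1"
proof -
  have 1: "fps_conv_radius (if j = m then Abs_fps (hcoef (AS m) (BS m)) else fps_X * Abs_fps (hcoef (AS m) (BS m))) \<ge> 1"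
  proof (cases "j = m")
    case True then show ?thesis using radius_hc by simp
  next
    case False
    have "1 \<le> min (fps_conv_radius (fps_X :: complex fps)) (fps_conv_radius (Abs_fps (hcoef (AS m) (BS m))))"
      using radius_hc by simp
    also have "\<dots> \<le> fps_conv_radius (fps_X * Abs_fps (hcoef (AS m) (BS m)))" by (rule fps_conv_radius_mult)
    finally show ?thesis using False by simp
  qed
  have "1 \<le> min (fps_conv_radius (fps_const (normc N a th0 thi r j m))) (fps_conv_radius (if j = m then Abs_fps (hcoef (AS m) (BS m)) else fps_X * Abs_fps (hcoef (AS m) (BS m))))"
    using 1 by simp
  also have "\<dots> \<le> fps_conv_radius (H m)" unfolding H_eq by (rule fps_conv_radius_mult)
  finally show ?thesis .
qed

lemma radius_H': "norm x < 1 \<Longrightarrow> norm x < fps_conv_radius (H m)"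
  using radius_H[of m] by (meson ereal_less(3) less_ereal.simps(1) order_less_le_trans) 

lemma radius_dH': "norm x < 1 \<Longrightarrow> norm x < fps_conv_radius (fps_deriv (H m))"
  using radius_H'[of x m] fps_conv_radius_deriv[of "H m"] by (meson order_less_le_trans)

lemma PhiSol_eq: assumes y: "norm y > 1"
  shows "PhiSol N a th0 thi r y j m = y powr (- thi j) * (1 - 1/y) powr (- a / of_nat N) * eval_fps (H m) (1/y)"
proof -
  have y0: "y \<noteq> 0" using y by auto
  have x1: "norm (1/y) < 1" using y by (simp add: norm_divide divide_less_eq)
  have rx: "norm (1/y) < fps_conv_radius (Abs_fps (hcoef (AS m) (BS m)))"
    using radius_hc[of m] x1 by (meson ereal_less(3) less_ereal.simps(1) order_less_le_trans)
  show ?thesis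
  proof (cases "j = m")
    case True
    then have mj: "m = j" by simp
    have Hj: "H j = Abs_fps (hcoef (AS j) (BS j))" by (simp add: H_eq normc_def)
    show ?thesis unfolding mj PhiSol_def hyp_pFq_eval Hj
      by (simp add: kdelta_def normc_def AS_def BS_def)
  next
    case False
    have e: "eval_fps (H m) (1/y) = normc N a th0 thi r j m * ((1/y) * eval_fps (Abs_fps (hcoef (AS m) (BS m))) (1/y))"
    proof -
      have r2: "norm (1/y) < fps_conv_radius (fps_X * Abs_fps (hcoef (AS m) (BS m)))"
        by (rule radius_mult_lt) (simp_all add: rx)
      have 1: "eval_fps (fps_const (normc N a th0 thi r j m) * (fps_X * Abs_fps (hcoef (AS m) (BS m)))) (1/y)
          = normc N a th0 thi r j m * eval_fps (fps_X * Abs_fps (hcoef (AS m) (BS m))) (1/y)"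
        by (subst eval_fps_mult) (simp_all add: r2)
      have 2: "eval_fps (fps_X * Abs_fps (hcoef (AS m) (BS m))) (1/y) = (1/y) * eval_fps (Abs_fps (hcoef (AS m) (BS m))) (1/y)"
        by (subst eval_fps_mult) (simp_all add: rx)
      show ?thesis unfolding H_eq using False 1 2 by simp
    qed
    have p: "y powr (- thi j - 1 + kdelta j m) = y powr (- thi j) * (1/y)"
      using False y0 by (simp add: kdelta_def powr_diff)
    show ?thesis unfolding PhiSol_def hyp_pFq_eval p e
      by (simp add: AS_def BS_def mult_ac)
  qed
qed

lemma fps_ode: assumes m: "m < N"
  shows "(1 - fps_X) * (fps_X * fps_deriv (H m) + fps_const (d m) * H m) =
    fps_X * fps_const (V m) * (\<Sum>k<N. fps_const (U k) * H k)"
proof -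
  define L where "L = fps_X * fps_deriv (H m) + fps_const (d m) * H m"
  have L: "fps_nth L n = (of_nat n + d m) * eta m n" for n
    by (cases n) (simp_all add: L_def H_def algebra_simps)
  have lhs: "fps_nth ((1 - fps_X) * L) n = fps_nth L n - (if n = 0 then 0 else fps_nth L (n - 1))" for n
    by (simp add: algebra_simps)
  show ?thesis
    unfolding L_def[symmetric]
  proof (rule fps_ext)
    fix n
    show "fps_nth ((1 - fps_X) * L) n = fps_nth (fps_X * fps_const (V m) * (\<Sum>k<N. fps_const (U k) * H k)) n"
    proof (cases n)
      case 0
      then show ?thesis using m unfolding lhs L by (cases "m = j") (simp_all add: eta_zero)
    next
      case (Suc k)
      have "fps_nth (fps_X * fps_const (V m) * (\<Sum>k<N. fps_const (U k) * H k)) n =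
          V m * (\<Sum>i<N. U i * eta i k)"
        using Suc by (simp add: mult.assoc fps_sum_nth H_def)
      then show ?thesis unfolding lhs L using Suc key[OF m, of k] by simp
    qed
  qed
qed

lemma fun_ode: assumes m: "m < N" and x: "norm x < 1"
  shows "(1 - x) * (x * eval_fps (fps_deriv (H m)) x + d m * eval_fps (H m) x) =
    x * V m * (\<Sum>k<N. U k * eval_fps (H k) x)"
proof -
  have rH: "\<And>k. norm x < fps_conv_radius (H k)" using radius_H' x by blast
  have rD: "norm x < fps_conv_radius (fps_deriv (H m))" using radius_dH' x by blast
  have rX: "norm x < fps_conv_radius (fps_X :: complex fps)" by simp
  have rC: "\<And>c. norm x < fps_conv_radius (fps_const c :: complex fps)" by simp
  have r1: "norm x < fps_conv_radius (1 - fps_X :: complex fps)"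
    using fps_conv_radius_diff[of 1 "fps_X :: complex fps"] by simp
  have rmul: "\<And>f g. norm x < fps_conv_radius f \<Longrightarrow> norm x < fps_conv_radius g \<Longrightarrow> norm x < fps_conv_radius (f * g)"
    using fps_conv_radius_mult by (metis min_less_iff_conj order_less_le_trans)
  have radd: "\<And>f g. norm x < fps_conv_radius f \<Longrightarrow> norm x < fps_conv_radius g \<Longrightarrow> norm x < fps_conv_radius (f + g)"
    using fps_conv_radius_add by (metis min_less_iff_conj order_less_le_trans)
  have rS: "norm x < fps_conv_radius (\<Sum>k<N. fps_const (U k) * H k)"
   and eS: "eval_fps (\<Sum>k<N. fps_const (U k) * H k) x = (\<Sum>k<N. eval_fps (fps_const (U k) * H k) x)"
    using eval_fps_sum[of "{..<N}" x "\<lambda>k. fps_const (U k) * H k"] rmul[OF rC rH] by auto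
  have "eval_fps ((1 - fps_X) * (fps_X * fps_deriv (H m) + fps_const (d m) * H m)) x =
        eval_fps (fps_X * fps_const (V m) * (\<Sum>k<N. fps_const (U k) * H k)) x"
    by (simp only: fps_ode[OF m])
  moreover have "eval_fps ((1 - fps_X) * (fps_X * fps_deriv (H m) + fps_const (d m) * H m)) x =
     (1 - x) * (x * eval_fps (fps_deriv (H m)) x + d m * eval_fps (H m) x)"
    by (simp add: eval_fps_mult eval_fps_add eval_fps_diff r1 rX rD rC rH radd rmul)
  moreover have "eval_fps (fps_X * fps_const (V m) * (\<Sum>k<N. fps_const (U k) * H k)) x =
     x * V m * (\<Sum>k<N. U k * eval_fps (H k) x)"
    by (simp add: eval_fps_mult rX rC rS eS rH rmul)
  ultimately show ?thesis by simp
qed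

end

lemma final_alg:
  fixes y Y E G Gp S s c tm Vm :: complex
  assumes y0: "y \<noteq> 0" and y1: "y \<noteq> 1"
    and ode: "(1 - 1/y) * ((1/y) * Gp + (-s - tm) * G) = (1/y) * Vm * S"
  shows "(s * (Y / y) * E + c * (E / (1 - 1/y)) * (1/y^2) * Y) * G + Gp * (-1/y^2) * (Y * E)
         = Y * E * (- tm * G / y + (1/(y*(y-1))) * (- (Vm * S) + c * G))"
proof -
  have ym: "y - 1 \<noteq> 0" using y1 by simp
  have VS: "Vm * S = (y - 1) * ((1/y) * Gp + (-s - tm) * G)"
  proof -
    have "Vm * S = y * ((1/y) * Vm * S)" using y0 by simp
    also have "\<dots> = y * ((1 - 1/y) * ((1/y) * Gp + (-s - tm) * G))" by (simp only: ode)
    also have "\<dots> = (y - 1) * ((1/y) * Gp + (-s - tm) * G)" using y0 by (simp add: field_simps)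
    finally show ?thesis .
  qed
  have e: "1 - 1/y = (y - 1)/y" using y0 by (simp add: field_simps)
  show ?thesis unfolding VS e using y0 ym by (simp add: field_simps power2_eq_square)
qed

lemma pt_alg:
  fixes G U V dl a n t y A1 :: complex
  assumes y0: "y \<noteq> 0" and y1: "y \<noteq> 1" and A1: "A1 = - U * V - dl * a / n"
  shows "G * ((- A1 - dl * t) / y + A1 / (y - 1)) =
     (- (V * (U * G))) / (y*(y-1)) + dl * ((- a / n) * G / (y*(y-1)) - t * G / y)"
proof -
  have ym: "y - 1 \<noteq> 0" using y1 by simp
  define z where "z = 1 / y"
  define q where "q = 1 / (y * (y - 1))"
  define p where "p = a / n"
  have d1: "X / y = X * z" for X by (simp add: z_def)
  have d2: "X / (y * (y - 1)) = X * q" for X by (simp add: q_def)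
  have d3: "X / (y - 1) = X * (q + z)" for X
    using y0 ym by (simp add: q_def z_def field_simps)
  have A1': "A1 = - U * V - dl * p" using A1 by (simp add: p_def)
  have r: "(- a / n) = - p" by (simp add: p_def)
  show ?thesis unfolding A1' r d1 d2 d3 by (simp add: algebra_simps)
qed
lemma kdelta_sum: assumes "m < N" shows "(\<Sum>k<N. kdelta k m * f k) = (f m :: complex)"
proof -
  have "(\<Sum>k<N. kdelta k m * f k) = (\<Sum>k<N. if k = m then f k else 0)"
    by (rule sum.cong) (simp_all add: kdelta_def)
  then show ?thesis using assms by simp
qed

context fixj
begin

lemma N_pos: "(of_nat N :: complex) \<noteq> 0" using jN by simp

lemma sumA: assumes y0: "y \<noteq> 0" and y1: "y \<noteq> 1" and m: "m < N"
  shows "(\<Sum>k<N. Gk k * (matA0 N a th0 thi r k m / y + matA1 N a th0 thi r k m / (y - 1))) =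
    - thi m * Gk m / y + (1/(y*(y-1))) * (- (V m * (\<Sum>k<N. U k * Gk k)) + (- a / of_nat N) * Gk m)"
proof -
  have ym: "y - 1 \<noteq> 0" using y1 by simp
  have pt: "Gk k * (matA0 N a th0 thi r k m / y + matA1 N a th0 thi r k m / (y - 1)) =
      (- (V m * (U k * Gk k))) / (y*(y-1)) + kdelta k m * ((- a / of_nat N) * Gk k / (y*(y-1)) - thi k * Gk k / y)" for k
    unfolding matA0_def by (rule pt_alg[OF y0 y1]) (simp add: matA1_UV U_def V_def)
  have "(\<Sum>k<N. Gk k * (matA0 N a th0 thi r k m / y + matA1 N a th0 thi r k m / (y - 1))) =
     (\<Sum>k<N. (- (V m * (U k * Gk k))) / (y*(y-1))) + (\<Sum>k<N. kdelta k m * ((- a / of_nat N) * Gk k / (y*(y-1)) - thi k * Gk k / y))"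
    unfolding pt by (rule sum.distrib)
  also have "(\<Sum>k<N. kdelta k m * ((- a / of_nat N) * Gk k / (y*(y-1)) - thi k * Gk k / y)) =
      (- a / of_nat N) * Gk m / (y*(y-1)) - thi m * Gk m / y"
    by (rule kdelta_sum[OF m])
  also have "(\<Sum>k<N. (- (V m * (U k * Gk k))) / (y*(y-1))) = (- (V m * (\<Sum>k<N. U k * Gk k))) / (y*(y-1))"
    by (simp add: sum_divide_distrib sum_distrib_left sum_negf)
  finally have F: "(\<Sum>k<N. Gk k * (matA0 N a th0 thi r k m / y + matA1 N a th0 thi r k m / (y - 1))) =
     (- (V m * (\<Sum>k<N. U k * Gk k))) / (y*(y-1)) + ((- a / of_nat N) * Gk m / (y*(y-1)) - thi m * Gk m / y)" .
  define q where "q = 1 / (y * (y - 1))"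
  define z where "z = 1 / y"
  have d1: "X / y = X * z" for X by (simp add: z_def)
  have d2: "X / (y * (y - 1)) = X * q" for X by (simp add: q_def)
  show ?thesis unfolding F unfolding d1 d2 by (simp add: algebra_simps)
qed

lemma deriv_main: assumes y: "y \<in> solDom" and m: "m < N"
  shows "((\<lambda>z. PhiSol N a th0 thi r z j m) has_field_derivative
           (\<Sum>k<N. PhiSol N a th0 thi r y j k *
               (matA0 N a th0 thi r k m / y + matA1 N a th0 thi r k m / (y - 1)))) (at y)"
proof -
  have y1: "norm y > 1" and yR: "y \<notin> \<real>\<^sub>\<le>\<^sub>0"
    using y by (auto simp: solDom_def complex_nonpos_Reals_iff complex_is_Real_iff)
  have y0: "y \<noteq> 0" using y1 by auto
  have yn1: "y \<noteq> 1" using y1 by auto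
  define x where "x = 1 / y"
  have x1: "norm x < 1" using y1 by (simp add: x_def norm_divide divide_less_eq)
  have xR: "1 - x \<notin> \<real>\<^sub>\<le>\<^sub>0"
  proof -
    have "Re x \<le> norm x" by (rule complex_Re_le_cmod)
    then have "Re (1 - x) > 0" using x1 by simp
    then show ?thesis by (auto simp: complex_nonpos_Reals_iff)
  qed
  define s where "s = - thi j"
  define c where "c = - a / of_nat N"
  define G where "G k = eval_fps (H k)" for k
  define Gp where "Gp = eval_fps (fps_deriv (H m))"
  define f where "f z = (z powr s * (1 - 1/z) powr c) * G m (1/z)" for z
  have d1: "((\<lambda>z. z powr s) has_field_derivative s * y powr (s - 1)) (at y)"
    by (rule has_field_derivative_powr[OF yR])
  have d2: "((\<lambda>z. 1 - 1/z) has_field_derivative 1/y^2) (at y)"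
    using y0 by (auto intro!: derivative_eq_intros simp: power2_eq_square field_simps)
  have d3: "((\<lambda>z. (1 - 1/z) powr c) has_field_derivative c * (1 - 1/y) powr (c - 1) * (1/y^2)) (at y)"
    using DERIV_chain2[OF has_field_derivative_powr[OF xR[unfolded x_def]] d2] by (simp add: mult_ac)
  have d4: "((\<lambda>z. 1/z) has_field_derivative -1/y^2) (at y)"
    using y0 by (auto intro!: derivative_eq_intros simp: power2_eq_square field_simps)
  have rH: "norm x < fps_conv_radius (H m)" using radius_H' x1 .
  have d5: "((\<lambda>z. G m (1/z)) has_field_derivative Gp (1/y) * (-1/y^2)) (at y)"
    unfolding G_def Gp_def
    by (rule DERIV_chain2[OF has_field_derivative_eval_fps d4]) (use rH in \<open>simp add: x_def\<close>)
  have df: "(f has_field_derivative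
      (s * y powr (s - 1) * (1 - 1/y) powr c + c * (1 - 1/y) powr (c - 1) * (1/y^2) * y powr s) * G m (1/y)
      + Gp (1/y) * (-1/y^2) * (y powr s * (1 - 1/y) powr c)) (at y)"
    unfolding f_def by (rule DERIV_mult[OF DERIV_mult[OF d1 d3] d5])
  have eqS: "f z = PhiSol N a th0 thi r z j m" if "z \<in> {z. 1 < norm z}" for z
    using that PhiSol_eq[of z m] by (simp add: f_def G_def s_def c_def)
  have opn: "open {z::complex. 1 < norm z}"
    by (rule open_Collect_less) (auto intro: continuous_intros)
  have dP: "((\<lambda>z. PhiSol N a th0 thi r z j m) has_field_derivative
      (s * y powr (s - 1) * (1 - 1/y) powr c + c * (1 - 1/y) powr (c - 1) * (1/y^2) * y powr s) * G m (1/y)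
      + Gp (1/y) * (-1/y^2) * (y powr s * (1 - 1/y) powr c)) (at y)"
    by (rule has_field_derivative_transform_within_open[OF df opn _ eqS]) (use y1 in simp)
  define Y where "Y = y powr s"
  define E where "E = (1 - 1/y) powr c"
  have p1: "y powr (s - 1) = Y / y" using y0 by (simp add: Y_def powr_diff)
  have xnz: "1 - 1/y \<noteq> 0" using xR x_def by auto
  have p2: "(1 - 1/y) powr (c - 1) = E / (1 - 1/y)" using xnz by (simp add: E_def powr_diff)
  have Phk: "PhiSol N a th0 thi r y j k = Y * E * G k (1/y)" for k
    using PhiSol_eq[OF y1, of k] by (simp add: Y_def E_def G_def s_def c_def)
  have ode: "(1 - 1/y) * ((1/y) * Gp (1/y) + (-s - thi m) * G m (1/y)) = (1/y) * V m * (\<Sum>k<N. U k * G k (1/y))"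
    using fun_ode[OF m x1] by (simp add: G_def Gp_def x_def d_def s_def)
  have eqD: "(s * y powr (s - 1) * (1 - 1/y) powr c + c * (1 - 1/y) powr (c - 1) * (1/y^2) * y powr s) * G m (1/y)
      + Gp (1/y) * (-1/y^2) * (y powr s * (1 - 1/y) powr c)
      = (\<Sum>k<N. PhiSol N a th0 thi r y j k * (matA0 N a th0 thi r k m / y + matA1 N a th0 thi r k m / (y - 1)))"
  proof -
  have "(s * y powr (s - 1) * (1 - 1/y) powr c + c * (1 - 1/y) powr (c - 1) * (1/y^2) * y powr s) * G m (1/y)
      + Gp (1/y) * (-1/y^2) * (y powr s * (1 - 1/y) powr c)
      = (s * (Y / y) * E + c * (E / (1 - 1/y)) * (1/y^2) * Y) * G m (1/y) + Gp (1/y) * (-1/y^2) * (Y * E)"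
    unfolding p1 p2 by (simp add: Y_def E_def)
  also have "\<dots> = Y * E * (- thi m * G m (1/y) / y + (1/(y*(y-1))) * (- (V m * (\<Sum>k<N. U k * G k (1/y))) + c * G m (1/y)))"
    by (rule final_alg[OF y0 yn1 ode])
  also have "\<dots> = Y * E * (\<Sum>k<N. G k (1/y) * (matA0 N a th0 thi r k m / y + matA1 N a th0 thi r k m / (y - 1)))"
    unfolding sumA[OF y0 yn1 m, of "\<lambda>k. G k (1/y)"] c_def ..
  also have "\<dots> = (\<Sum>k<N. PhiSol N a th0 thi r y j k * (matA0 N a th0 thi r k m / y + matA1 N a th0 thi r k m / (y - 1)))"
    unfolding Phk sum_distrib_left by (simp add: mult_ac)
  finally show ?thesis .
  qed
  show ?thesis by (rule DERIV_cong[OF dP eqD])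
qed

lemma asym: assumes m: "m < N"
  shows "\<exists>C R. \<forall>y\<in>solDom. norm y > R \<longrightarrow>
          norm (y powr (thi j) * PhiSol N a th0 thi r y j m - kdelta j m) \<le> C / norm y"
proof -
  define c where "c = - a / of_nat N"
  define phi where "phi x = (1 - x) powr c * eval_fps (H m) x" for x
  have one: "(1 - 0 :: complex) \<notin> \<real>\<^sub>\<le>\<^sub>0" by (simp add: complex_nonpos_Reals_iff)
  have dl: "((\<lambda>x::complex. 1 - x) has_field_derivative -1) (at 0)"
    by (auto intro!: derivative_eq_intros)
  have dA: "((\<lambda>x. (1 - x) powr c) has_field_derivative c * (1 - 0) powr (c - 1) * -1) (at 0)"
    by (rule DERIV_chain2[OF has_field_derivative_powr[OF one] dl])
  have r0: "norm (0::complex) < fps_conv_radius (H m)" using radius_H'[of 0 m] by simp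
  have dB: "(eval_fps (H m) has_field_derivative eval_fps (fps_deriv (H m)) 0) (at 0)"
    by (rule has_field_derivative_eval_fps[OF r0])
  obtain D where dphi: "(phi has_field_derivative D) (at 0)"
    using DERIV_mult[OF dA dB] unfolding phi_def by blast
  have phi0: "phi 0 = kdelta j m"
    using m by (simp add: phi_def eval_fps_at_0 H_def eta_zero kdelta_def)
  have "((\<lambda>z. (phi z - phi 0) / (z - 0)) \<longlongrightarrow> D) (at 0)"
    using dphi by (simp add: has_field_derivative_iff)
  then have "eventually (\<lambda>z. dist ((phi z - phi 0) / (z - 0)) D < 1) (at 0)"
    by (rule tendstoD) simp
  then obtain del where del: "del > 0"
    and H1: "\<And>z. z \<noteq> 0 \<Longrightarrow> dist z 0 < del \<Longrightarrow> dist ((phi z - phi 0) / (z - 0)) D < 1"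
    unfolding eventually_at by blast
  have bound: "norm (phi z - phi 0) \<le> (norm D + 1) * norm z" if "z \<noteq> 0" "norm z < del" for z
  proof -
    have "dist ((phi z - phi 0) / z) D < 1" using H1[of z] that by simp
    then have "norm ((phi z - phi 0) / z) \<le> norm D + 1"
    proof -
      have "norm ((phi z - phi 0) / z) \<le> norm D + norm ((phi z - phi 0) / z - D)" by (rule norm_triangle_sub)
      moreover have "norm ((phi z - phi 0) / z - D) < 1" using \<open>dist ((phi z - phi 0) / z) D < 1\<close> by (simp add: dist_norm)
      ultimately show ?thesis by linarith
    qed
    then have "norm (phi z - phi 0) / norm z \<le> norm D + 1" by (simp add: norm_divide)
    then show ?thesis using that by (simp add: field_simps)
  qed
  show ?thesis
  proof (intro exI ballI impI)
    fix y assume y: "y \<in> solDom" and yR: "max 1 (1 / del) < norm y"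
    have y1: "norm y > 1" using yR by simp
    have y0: "y \<noteq> 0" using y1 by auto
    have yd: "norm y > 1 / del" using yR by simp
    have z0: "1 / y \<noteq> 0" using y0 by simp
    have zd: "norm (1 / y) < del"
      using yd del y0 by (simp add: norm_divide field_simps)
    have pw: "y powr thi j * y powr (- thi j) = 1"
      using y0 by (simp add: powr_def exp_add[symmetric])
    have "y powr (thi j) * PhiSol N a th0 thi r y j m =
        (y powr thi j * y powr (- thi j)) * ((1 - 1/y) powr c * eval_fps (H m) (1/y))"
      by (simp only: PhiSol_eq[OF y1] c_def mult.assoc)
    also have "\<dots> = phi (1 / y)" unfolding pw phi_def by simp
    finally have "y powr (thi j) * PhiSol N a th0 thi r y j m = phi (1 / y)" .
    then have "norm (y powr (thi j) * PhiSol N a th0 thi r y j m - kdelta j m) = norm (phi (1/y) - phi 0)"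
      by (simp add: phi0)
    also have "\<dots> \<le> (norm D + 1) * norm (1 / y)" by (rule bound[OF z0 zd])
    also have "\<dots> = (norm D + 1) / norm y" by (simp add: norm_divide)
    finally show "norm (y powr (thi j) * PhiSol N a th0 thi r y j m - kdelta j m) \<le> (norm D + 1) / norm y" .
  qed
qed

end

theorem theorem2p5:
  fixes N :: nat and a :: complex and th0 thi r :: "nat \<Rightarrow> complex"
  assumes "N \<ge> 2"
    and "(\<Sum>k<N. th0 k) = 0"
    and "(\<Sum>k<N. thi k) = 0"
    and "\<And>k l. k < N \<Longrightarrow> l < N \<Longrightarrow> k \<noteq> l \<Longrightarrow> thi k \<noteq> thi l"
    and "\<And>k l n. k < N \<Longrightarrow> l < N \<Longrightarrow> n \<noteq> 0 \<Longrightarrow> thi k - thi l \<noteq> of_int n"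
    and "\<And>j. j < N \<Longrightarrow> r j \<noteq> 0"
  shows
    "(\<forall>y\<in>solDom. \<forall>j<N. \<forall>m<N.
        ((\<lambda>z. PhiSol N a th0 thi r z j m) has_field_derivative
           (\<Sum>k<N. PhiSol N a th0 thi r y j k *
               (matA0 N a th0 thi r k m / y + matA1 N a th0 thi r k m / (y - 1)))) (at y))
     \<and> (\<forall>j<N. \<forall>m<N. \<exists>C R. \<forall>y\<in>solDom. norm y > R \<longrightarrow>
          norm (y powr (thi j) * PhiSol N a th0 thi r y j m - kdelta j m) \<le> C / norm y)"
proof -
  have L: "fixj N thi r j" if "j < N" for j
    using that assms(4,5,6) by unfold_locales auto
  show ?thesis
  proof (intro conjI ballI allI impI)
    fix y j m assume "y \<in> solDom" "j < N" "m < N"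
    then show "((\<lambda>z. PhiSol N a th0 thi r z j m) has_field_derivative
           (\<Sum>k<N. PhiSol N a th0 thi r y j k *
               (matA0 N a th0 thi r k m / y + matA1 N a th0 thi r k m / (y - 1)))) (at y)"
      using fixj.deriv_main[OF L] by blast
  next
    fix j m assume "j < N" "m < N"
    then show "\<exists>C R. \<forall>y\<in>solDom. norm y > R \<longrightarrow>
          norm (y powr (thi j) * PhiSol N a th0 thi r y j m - kdelta j m) \<le> C / norm y"
      using fixj.asym[OF L] by blast
  qed
qed

end
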